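(* Let $\mathbb W$, $\mathbb W_i$ and $C$ be as in the context. An automorphism $\theta\in\operatorname{Aut}(\mathbb W)$ lies in $C$ if and only if $\theta(\mathbb W_i)=\mathbb W_i$ for every $2\le i\le n$.
   Context: Fix an integer $n\ge 3$, pairwise distinct odd integers $m_1,\dots,m_l\ge 3$ and positive integers $k_1,\dots,k_l$ with $k_1+\cdots+k_l=n-1$. Partition $\{2,\dots,n\}$ into consecutive blocks $A_1=\{2,\dots,k_1+1\}$, $A_2=\{k_1+2,\dots,k_1+k_2+1\}$, …, $A_l$ (of sizes $k_1,\dots,k_l$), and put $t_i=m_j$ for $i\in A_j$. The star group is $\mathbb W=\langle w_1,\dots,w_n\mid w_j^2=1\ (1\le j\le n),\ (w_1w_i)^{t_i}=1\ (2\le i\le n)\rangle$. For $2\le i\le n$ let $\mathbb W_i=\langle w_1,w_i\rangle$ (dihedral of order $2t_i$). For $2\le i\le n$ and $1\le k<t_i$ with $\gcd(k,t_i)=1$, $\theta_i^k$ is the automorphism of $\mathbb W$ with $\theta_i^k(w_j)=w_j$ for $j\ne i$ and $\theta_i^k(w_i)=w_1(w_1w_i)^k$. Let $C_i=\langle\theta_i^k : 1\le k<t_i,\ \gcd(k,t_i)=1\rangle\cong \operatorname{U}_{t_i}$ (the unit group of $\mathbb Z/t_i\mathbb Z$) and $C=C_2\times C_3\times\cdots\times C_n\le\operatorname{Aut}(\mathbb W)$, an abelian subgroup isomorphic to $\prod_{j=1}^l(\operatorname{U}_{m_j})^{k_j}$. *)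

theory Defs
  imports "HOL-Algebra.Algebra"
begin

text \<open>Words over the generator indices 1..n; star_rel n t is the congruence on words
  generated by the defining relations w_j w_j = 1 (1 <= j <= n) and (w_1 w_i)^(t i) = 1
  (2 <= i <= n).\<close>

inductive star_rel :: "nat \<Rightarrow> (nat \<Rightarrow> nat) \<Rightarrow> nat list \<Rightarrow> nat list \<Rightarrow> bool"
  for n :: nat and t :: "nat \<Rightarrow> nat" where
  refl: "star_rel n t u u"
| sym: "star_rel n t u v \<Longrightarrow> star_rel n t v u"
| trans: "star_rel n t u v \<Longrightarrow> star_rel n t v w \<Longrightarrow> star_rel n t u w"
| cong: "star_rel n t u v \<Longrightarrow> star_rel n t (a @ u @ b) (a @ v @ b)"
| invol: "j \<in> {1..n} \<Longrightarrow> star_rel n t [j, j] []"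
| braid: "i \<in> {2..n} \<Longrightarrow> star_rel n t (concat (replicate (t i) [1, i])) []"

definition star_eqv :: "nat \<Rightarrow> (nat \<Rightarrow> nat) \<Rightarrow> (nat list \<times> nat list) set" where
  "star_eqv n t = {(u, v). u \<in> lists {1..n} \<and> v \<in> lists {1..n} \<and> star_rel n t u v}"

definition star_group :: "nat \<Rightarrow> (nat \<Rightarrow> nat) \<Rightarrow> nat list set monoid" where
  "star_group n t =
    \<lparr> carrier = lists {1..n} // star_eqv n t,
      monoid.mult = (\<lambda>P Q. (\<Union>x\<in>P. (\<Union>y\<in>Q. (star_eqv n t) `` {x @ y}))),
      monoid.one = star_eqv n t `` {[]} \<rparr>"

definition star_gen :: "nat \<Rightarrow> (nat \<Rightarrow> nat) \<Rightarrow> nat \<Rightarrow> nat list set" where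
  "star_gen n t j = star_eqv n t `` {[j]}"

definition star_Wi :: "nat \<Rightarrow> (nat \<Rightarrow> nat) \<Rightarrow> nat \<Rightarrow> nat list set set" where
  "star_Wi n t i = generate (star_group n t) {star_gen n t 1, star_gen n t i}"

definition star_thetas :: "nat \<Rightarrow> (nat \<Rightarrow> nat) \<Rightarrow> (nat list set \<Rightarrow> nat list set) set" where
  "star_thetas n t = {\<theta> \<in> auto (star_group n t). \<exists>i\<in>{2..n}. \<exists>k::nat.
      1 \<le> k \<and> k < t i \<and> coprime k (t i) \<and>
      (\<forall>j\<in>{1..n}. j \<noteq> i \<longrightarrow> \<theta> (star_gen n t j) = star_gen n t j) \<and>
      \<theta> (star_gen n t i) =
        star_gen n t 1 \<otimes>\<^bsub>star_group n t\<^esub>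
        ((star_gen n t 1 \<otimes>\<^bsub>star_group n t\<^esub> star_gen n t i) [^]\<^bsub>star_group n t\<^esub> k)}"

definition star_C :: "nat \<Rightarrow> (nat \<Rightarrow> nat) \<Rightarrow> (nat list set \<Rightarrow> nat list set) set" where
  "star_C n t = generate (AutoGroup (star_group n t)) (star_thetas n t)"

end

theory Submission
  imports Defs
begin
definition dm :: "int \<times> int \<Rightarrow> int \<times> int \<Rightarrow> int \<times> int" where
  "dm x y = (fst x * fst y, fst x * snd y + snd x)"

fun ev :: "nat \<Rightarrow> nat list \<Rightarrow> int \<times> int" where
  "ev i [] = (1, 0)"
| "ev i (x # w) = dm (if x = i then (-1, -1) else (-1, 0)) (ev i w)"

lemma ev_append: "ev i (u @ v) = dm (ev i u) (ev i v)"
  by (induct u) (auto simp: dm_def algebra_simps)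

lemma ev_sign: "fst (ev i w) = 1 \<or> fst (ev i w) = -1"
  by (induct w) (auto simp: dm_def)

lemma ev_rep: "i \<noteq> Suc 0 \<Longrightarrow> ev i (concat (replicate m [Suc 0, j])) = (1, if j = i then int m else 0)"
  by (induct m) (auto simp: dm_def ev_append)

lemma ev_inv: "star_rel n t u v \<Longrightarrow> i \<noteq> 1 \<Longrightarrow>
   fst (ev i u) = fst (ev i v) \<and> int (t i) dvd (snd (ev i u) - snd (ev i v))"
proof (induction rule: star_rel.induct)
  case (refl u) then show ?case by simp
next
  case (sym u v) then show ?case by (metis dvd_minus_iff minus_diff_eq)
next
  case (trans u v w) then show ?case
    by (metis (no_types, lifting) diff_add_cancel add_diff_eq dvd_add)
next
  case (cong u v a b)
  then have f: "fst (ev i u) = fst (ev i v)" and d: "int (t i) dvd (snd (ev i u) - snd (ev i v))" by auto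
  have "snd (ev i (a @ u @ b)) - snd (ev i (a @ v @ b)) = fst (ev i a) * (snd (ev i u) - snd (ev i v))"
    using f by (simp add: ev_append dm_def algebra_simps)
  then show ?case using f d by (simp add: ev_append dm_def)
next
  case (invol j) then show ?case by (auto simp: dm_def)
next
  case (braid j) then show ?case by (auto simp: ev_rep)
qed

lemma inv_mod: assumes "coprime (a::nat) T" "T \<ge> 2" "1 \<le> a"
  shows "\<exists>b. 1 \<le> b \<and> b < T \<and> coprime b T \<and> (a * b) mod T = 1"
proof -
  obtain x y where xy: "a * x = T * y + gcd a T" using bezout_nat[of a T] assms(3) by auto
  then have e: "a * x = T * y + 1" using assms(1) by simp
  define b where "b = x mod T"
  have ab: "(a * b) mod T = 1"
  proof -
    have "(a * b) mod T = (a * x) mod T" by (simp add: b_def mod_mult_right_eq)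
    also have "\<dots> = (1 + T * y) mod T" using e by simp
    also have "\<dots> = 1 mod T" by (metis mod_mult_self2)
    also have "\<dots> = 1" using assms(2) by simp
    finally show ?thesis .
  qed
  have "b \<noteq> 0" using ab by (cases "b = 0") auto
  moreover have "b < T" using assms(2) by (simp add: b_def)
  moreover have "coprime b T"
  proof -
    have "gcd b T dvd (a * b) mod T" by (simp add: dvd_mod_iff)
    then have "gcd b T dvd 1" using ab by simp
    then show ?thesis by (simp add: coprime_iff_gcd_eq_1)
  qed
  ultimately show ?thesis using ab by (auto intro!: exI[of _ b])
qed

lemma dvd_coprime: assumes "int T dvd (int a * int b - 1)" shows "coprime a T"
proof -
  obtain c where c: "int a * int b - 1 = int T * c" using assms by blast
  have d1: "int (gcd a T) dvd int a * int b" by (simp add: gcd_int_def)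
  have d2: "int (gcd a T) dvd int T * c" by simp
  have "int (gcd a T) dvd 1"
    by (metis d1 d2 c dvd_diff_right_iff)
  then have "gcd a T = 1" by simp
  then show ?thesis by (simp add: coprime_iff_gcd_eq_1)
qed

lemma odd_dvd: assumes "odd T" "int T dvd 2 * int a" shows "T dvd a"
proof -
  have "int T dvd int (2 * a)" using assms(2) by simp
  then have "T dvd 2 * a" by (simp only: int_dvd_int_iff)
  moreover have "coprime T 2" using assms(1) by simp
  ultimately show ?thesis using coprime_dvd_mult_right_iff by blast
qed

locale star =
  fixes n :: nat and t :: "nat \<Rightarrow> nat"
  assumes n3: "n \<ge> 3"
  and tprop: "\<And>i. i \<in> {2..n} \<Longrightarrow> odd (t i) \<and> t i \<ge> 3"
begin

abbreviation "G \<equiv> star_group n t"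
abbreviation "E \<equiv> star_eqv n t"
abbreviation "L \<equiv> lists {1..n}"
definition cls :: "nat list \<Rightarrow> nat list set" where "cls w = E `` {w}"
abbreviation "g \<equiv> star_gen n t"

lemma rel_append: "star_rel n t u u' \<Longrightarrow> star_rel n t v v' \<Longrightarrow> star_rel n t (u@v) (u'@v')"
proof -
  assume a: "star_rel n t u u'" and b: "star_rel n t v v'"
  have "star_rel n t ([]@u@v) ([]@u'@v)" by (rule star_rel.cong[OF a])
  moreover have "star_rel n t (u'@v@[]) (u'@v'@[])" by (rule star_rel.cong[OF b])
  ultimately show ?thesis by (auto intro: star_rel.trans)
qed

lemma equivE: "equiv L E"
  unfolding equiv_def refl_on_def sym_def trans_def star_eqv_def
  by (auto intro: star_rel.refl star_rel.sym star_rel.trans)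

lemma cls_eq_iff: "u \<in> L \<Longrightarrow> v \<in> L \<Longrightarrow> cls u = cls v \<longleftrightarrow> star_rel n t u v"
  using equiv_class_eq_iff[OF equivE, of u v] unfolding cls_def star_eqv_def by auto

lemma mem_cls: "u \<in> L \<Longrightarrow> v \<in> cls u \<longleftrightarrow> v \<in> L \<and> star_rel n t u v"
  unfolding cls_def star_eqv_def by auto

lemma carrier_G: "carrier G = cls ` L"
  unfolding star_group_def quotient_def cls_def by auto

lemma carrierE: assumes "x \<in> carrier G" obtains w where "w \<in> L" "x = cls w"
  using assms carrier_G by auto

lemma cls_in: "w \<in> L \<Longrightarrow> cls w \<in> carrier G"
  using carrier_G by auto

lemma mult_cls: assumes "u \<in> L" "v \<in> L" shows "cls u \<otimes>\<^bsub>G\<^esub> cls v = cls (u @ v)"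
proof -
  have "\<And>x y. x \<in> cls u \<Longrightarrow> y \<in> cls v \<Longrightarrow> E `` {x @ y} = cls (u @ v)"
  proof -
    fix x y assume "x \<in> cls u" "y \<in> cls v"
    then have "x \<in> L" "y \<in> L" "star_rel n t u x" "star_rel n t v y" using mem_cls assms by auto
    then have "star_rel n t (u@v) (x@y)" using rel_append by blast
    then have "cls (x@y) = cls (u@v)" using cls_eq_iff assms \<open>x \<in> L\<close> \<open>y \<in> L\<close>
      by (simp add: star_rel.sym)
    then show "E `` {x @ y} = cls (u @ v)" by (simp add: cls_def)
  qed
  moreover have "u \<in> cls u" "v \<in> cls v" using assms mem_cls star_rel.refl by auto
  ultimately show ?thesis unfolding star_group_def by auto
qed

lemma one_G: "\<one>\<^bsub>G\<^esub> = cls []"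
  by (simp add: star_group_def cls_def)


lemma rev_rel: "w \<in> L \<Longrightarrow> star_rel n t (rev w @ w) []"
proof (induction w)
  case Nil then show ?case by (simp add: star_rel.refl)
next
  case (Cons a w)
  then have a: "a \<in> {1..n}" and w: "w \<in> L" by auto
  have "star_rel n t (rev w @ [a,a] @ w) (rev w @ [] @ w)"
    by (rule star_rel.cong[OF star_rel.invol[OF a]])
  then show ?case using Cons.IH[OF w] by (auto intro: star_rel.trans)
qed

lemma grp: "group G"
proof (rule groupI)
  fix x y assume "x \<in> carrier G" "y \<in> carrier G"
  then show "x \<otimes>\<^bsub>G\<^esub> y \<in> carrier G"
    by (metis append_in_lists_conv carrierE cls_in mult_cls)
next
  show "\<one>\<^bsub>G\<^esub> \<in> carrier G" using one_G cls_in by auto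
next
  fix x y z assume "x \<in> carrier G" "y \<in> carrier G" "z \<in> carrier G"
  then obtain a b c where "a \<in> L" "b \<in> L" "c \<in> L" "x = cls a" "y = cls b" "z = cls c"
    by (metis carrierE)
  then show "x \<otimes>\<^bsub>G\<^esub> y \<otimes>\<^bsub>G\<^esub> z = x \<otimes>\<^bsub>G\<^esub> (y \<otimes>\<^bsub>G\<^esub> z)"
    by (simp add: mult_cls)
next
  fix x assume "x \<in> carrier G"
  then obtain a where "a \<in> L" "x = cls a" by (metis carrierE)
  then show "\<one>\<^bsub>G\<^esub> \<otimes>\<^bsub>G\<^esub> x = x" by (simp add: one_G mult_cls)
next
  fix x assume "x \<in> carrier G"
  then obtain a where a: "a \<in> L" "x = cls a" by (metis carrierE)
  have "cls (rev a) \<otimes>\<^bsub>G\<^esub> x = \<one>\<^bsub>G\<^esub>"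
  proof -
    have "rev a \<in> L" using a by (auto simp: in_lists_conv_set)
    then have "cls (rev a) \<otimes>\<^bsub>G\<^esub> cls a = cls (rev a @ a)" using a mult_cls by blast
    also have "\<dots> = cls []" using a \<open>rev a \<in> L\<close> cls_eq_iff rev_rel by simp
    finally show ?thesis using a one_G by simp
  qed
  moreover have "cls (rev a) \<in> carrier G" using a by (auto simp: in_lists_conv_set intro!: cls_in)
  ultimately show "\<exists>y\<in>carrier G. y \<otimes>\<^bsub>G\<^esub> x = \<one>\<^bsub>G\<^esub>" by blast
qed

sublocale grp: group G by (rule grp)

lemma g_cls: "g j = cls [j]" by (simp add: star_gen_def cls_def)

lemma g_in: "j \<in> {1..n} \<Longrightarrow> g j \<in> carrier G" by (simp add: g_cls cls_in)

lemma concat_rep_L: "w \<in> L \<Longrightarrow> concat (replicate m w) \<in> L"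
  by (induct m) auto

lemma concat_rep_comm: "concat (replicate m w) @ w = w @ concat (replicate m w)"
  by (induct m) auto

lemma pow_cls: "w \<in> L \<Longrightarrow> cls w [^]\<^bsub>G\<^esub> (m::nat) = cls (concat (replicate m w))"
proof (induction m)
  case 0 then show ?case by (simp add: one_G)
next
  case (Suc m)
  have "cls w [^]\<^bsub>G\<^esub> Suc m = cls w \<otimes>\<^bsub>G\<^esub> cls w [^]\<^bsub>G\<^esub> m"
    using Suc.prems by (metis grp.nat_pow_Suc2 cls_in)
  also have "\<dots> = cls (concat (replicate (Suc m) w))"
    using Suc concat_rep_L by (simp add: mult_cls)
  finally show ?case .
qed

lemma g_invol: "j \<in> {1..n} \<Longrightarrow> g j \<otimes>\<^bsub>G\<^esub> g j = \<one>\<^bsub>G\<^esub>"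
  by (simp add: g_cls mult_cls one_G cls_eq_iff star_rel.invol)

lemma g_inv: "j \<in> {1..n} \<Longrightarrow> inv\<^bsub>G\<^esub> g j = g j"
  by (simp add: g_invol g_in grp.inv_char)

lemma r_pow_t: "i \<in> {2..n} \<Longrightarrow> (g 1 \<otimes>\<^bsub>G\<^esub> g i) [^]\<^bsub>G\<^esub> t i = \<one>\<^bsub>G\<^esub>"
proof -
  assume i: "i \<in> {2..n}"
  then have "g 1 \<otimes>\<^bsub>G\<^esub> g i = cls [1, i]" by (simp add: g_cls mult_cls)
  moreover have "[1,i] \<in> L" using i by auto
  ultimately have "(g 1 \<otimes>\<^bsub>G\<^esub> g i) [^]\<^bsub>G\<^esub> t i = cls (concat (replicate (t i) [1,i]))"
    by (simp add: pow_cls)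
  also have "\<dots> = cls []"
  proof -
    have "star_rel n t (concat (replicate (t i) [1,i])) []" using i by (intro star_rel.braid) auto
    then show ?thesis using \<open>[1,i] \<in> L\<close> concat_rep_L cls_eq_iff by blast
  qed
  finally show ?thesis by (simp add: one_G)
qed


lemma cls_ev: "u \<in> L \<Longrightarrow> v \<in> L \<Longrightarrow> cls u = cls v \<Longrightarrow> i \<noteq> 1 \<Longrightarrow>
   fst (ev i u) = fst (ev i v) \<and> int (t i) dvd (snd (ev i u) - snd (ev i v))"
  using cls_eq_iff ev_inv by blast

abbreviation "r i \<equiv> g 1 \<otimes>\<^bsub>G\<^esub> g i"

lemma r_in: "i \<in> {1..n} \<Longrightarrow> r i \<in> carrier G" using g_in by auto

lemma r_pow_cls: "i \<in> {1..n} \<Longrightarrow> r i [^]\<^bsub>G\<^esub> (a::nat) = cls (concat (replicate a [1, i]))"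
proof -
  assume i: "i \<in> {1..n}"
  then have "r i = cls [1, i]" by (simp add: g_cls mult_cls)
  moreover have "[1, i] \<in> L" using i by auto
  ultimately show ?thesis by (simp add: pow_cls)
qed

lemma sr_pow_cls: "i \<in> {1..n} \<Longrightarrow> g 1 \<otimes>\<^bsub>G\<^esub> r i [^]\<^bsub>G\<^esub> (a::nat) = cls (1 # concat (replicate a [1, i]))"
proof -
  assume i: "i \<in> {1..n}"
  then have "concat (replicate a [1, i]) \<in> L" by (intro concat_rep_L) auto
  moreover have "[1] \<in> L" using n3 by auto
  moreover have "g 1 \<otimes>\<^bsub>G\<^esub> r i [^]\<^bsub>G\<^esub> a = cls [1] \<otimes>\<^bsub>G\<^esub> cls (concat (replicate a [1, i]))"
    by (subst r_pow_cls[OF i]) (simp only: g_cls)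
  ultimately show ?thesis using mult_cls by simp
qed

lemma S_cls: "i \<in> {1..n} \<Longrightarrow> g 1 \<otimes>\<^bsub>G\<^esub> cls (concat (replicate a [1, i])) = cls (1 # concat (replicate a [1, i]))"
  by (metis r_pow_cls sr_pow_cls)

lemma rep_L: "i \<in> {1..n} \<Longrightarrow> concat (replicate a [1, i]) \<in> L"
  by (intro concat_rep_L) auto

lemma one_L: "[1] \<in> L" using n3 by auto

lemma ev_cases: assumes "i \<in> {2..n}" "j \<in> {2..n}"
  shows "ev j (concat (replicate a [Suc 0, i])) = (1, if i = j then int a else 0)"
    and "ev j (Suc 0 # concat (replicate a [Suc 0, i])) = (-1, if i = j then - int a else 0)"
  using assms by (auto simp: ev_rep dm_def)

lemma t_pos: "i \<in> {2..n} \<Longrightarrow> t i \<ge> 3" using tprop by auto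

lemma R_eq: assumes "i \<in> {2..n}" "r i [^]\<^bsub>G\<^esub> (a::nat) = r i [^]\<^bsub>G\<^esub> (b::nat)"
  shows "int (t i) dvd (int a - int b)"
proof -
  have i1: "i \<in> {1..n}" using assms by auto
  have "cls (concat (replicate a [1, i])) = cls (concat (replicate b [1, i]))"
    using assms(2) by (simp only: r_pow_cls[OF i1])
  from cls_ev[OF rep_L[OF i1] rep_L[OF i1] this, of i] assms(1) show ?thesis
    by (simp add: ev_cases)
qed

lemma R_neq_S: assumes "i \<in> {2..n}" "j \<in> {2..n}"
  shows "r i [^]\<^bsub>G\<^esub> (a::nat) \<noteq> g 1 \<otimes>\<^bsub>G\<^esub> r j [^]\<^bsub>G\<^esub> (b::nat)"
proof
  assume "r i [^]\<^bsub>G\<^esub> (a::nat) = g 1 \<otimes>\<^bsub>G\<^esub> r j [^]\<^bsub>G\<^esub> (b::nat)"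
  moreover have "i \<in> {1..n}" "j \<in> {1..n}" using assms by auto
  ultimately have eq: "cls (concat (replicate a [1, i])) = cls (1 # concat (replicate b [1, j]))"
    by (simp only: r_pow_cls S_cls)
  have mem: "1 # concat (replicate b [1, j]) \<in> L" using rep_L \<open>j \<in> {1..n}\<close> by auto
  have "fst (ev i (concat (replicate a [1, i]))) = fst (ev i (1 # concat (replicate b [1, j])))"
    using cls_ev[OF rep_L[OF \<open>i \<in> {1..n}\<close>] mem eq, of i] assms by auto
  then show False using assms by (simp add: ev_cases dm_def)
qed


lemma g1_in: "g 1 \<in> carrier G" using g_in n3 by auto

lemma cancel2: "j \<in> {1..n} \<Longrightarrow> x \<in> carrier G \<Longrightarrow> g j \<otimes>\<^bsub>G\<^esub> (g j \<otimes>\<^bsub>G\<^esub> x) = x"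
  by (simp add: g_in g_invol grp.m_assoc[symmetric])

lemma Wi_words: assumes "i \<in> {2..n}" "x \<in> star_Wi n t i" shows "\<exists>v \<in> lists {1, i}. x = cls v"
proof -
  have i: "i \<in> {1..n}" using assms by auto
  from assms(2) show ?thesis unfolding star_Wi_def
  proof (induction rule: generate.induct)
    case one then show ?case by (auto simp: one_G)
  next
    case (incl h) then show ?case by (auto simp: g_cls intro: bexI[of _ "[1]"] bexI[of _ "[i]"])
  next
    case (inv h) then have "inv\<^bsub>G\<^esub> h = h" using i n3 g_inv by auto
    with inv show ?case by (auto simp: g_cls intro: bexI[of _ "[1]"] bexI[of _ "[i]"])
  next
    case (eng h1 h2)
    then obtain u v where "u \<in> lists {1, i}" "v \<in> lists {1, i}" "h1 = cls u" "h2 = cls v" by auto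
    moreover have "lists {1, i} \<subseteq> L" using i by auto
    ultimately have "h1 \<otimes>\<^bsub>G\<^esub> h2 = cls (u @ v)" "u @ v \<in> lists {1, i}" using mult_cls[of u v] by auto
    then show ?case by blast
  qed
qed

lemma NF_word: assumes i2: "i \<in> {2..n}" and v: "v \<in> lists {1, i}"
  shows "\<exists>a < t i. cls v = r i [^]\<^bsub>G\<^esub> a \<or> cls v = g 1 \<otimes>\<^bsub>G\<^esub> r i [^]\<^bsub>G\<^esub> a"
  using v
proof (induction v)
  case Nil then show ?case using t_pos[OF i2] by (auto simp: one_G[symmetric] intro: exI[of _ 0])
next
  case (Cons x v)
  have i: "i \<in> {1..n}" using i2 by auto
  have tp: "t i \<ge> 3" using t_pos[OF i2] .
  have s: "g 1 \<in> carrier G" and q: "g i \<in> carrier G" using g1_in g_in[OF i] by auto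
  have sub: "lists {1, i} \<subseteq> L" using i by auto
  have xv: "x # v \<in> lists {1, i}" using Cons by auto
  have vL: "v \<in> L" using xv sub by auto
  have xL: "[x] \<in> L" using xv i n3 by auto
  have cx: "cls (x # v) = g x \<otimes>\<^bsub>G\<^esub> cls v" using mult_cls[OF xL vL] by (simp add: g_cls)
  from Cons obtain a where a: "a < t i" and
    c: "cls v = r i [^]\<^bsub>G\<^esub> a \<or> cls v = g 1 \<otimes>\<^bsub>G\<^esub> r i [^]\<^bsub>G\<^esub> a" by auto
  have ra: "r i [^]\<^bsub>G\<^esub> a \<in> carrier G" "\<And>b::nat. r i [^]\<^bsub>G\<^esub> b \<in> carrier G" using r_in[OF i] by auto
  have rt: "r i [^]\<^bsub>G\<^esub> t i = \<one>\<^bsub>G\<^esub>" using r_pow_t[OF i2] .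
  show ?case
  proof (cases "x = 1")
    case True
    then show ?thesis using c a cx s ra cancel2[of 1] n3 by (auto simp: grp.m_assoc)
  next
    case False
    then have x: "x = i" using xv by auto
    show ?thesis
    proof (cases "cls v = r i [^]\<^bsub>G\<^esub> a")
      case True
      have e: "g i \<otimes>\<^bsub>G\<^esub> r i [^]\<^bsub>G\<^esub> a = g 1 \<otimes>\<^bsub>G\<^esub> r i [^]\<^bsub>G\<^esub> Suc a"
      proof -
        have "r i [^]\<^bsub>G\<^esub> Suc a = r i \<otimes>\<^bsub>G\<^esub> r i [^]\<^bsub>G\<^esub> a"
          using grp.nat_pow_Suc2 r_in[OF i] by blast
        then show ?thesis using s q ra cancel2[of 1] n3 by (simp add: grp.m_assoc)
      qed
      show ?thesis
      proof (cases "Suc a = t i")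
        case True
        then show ?thesis using e cx x \<open>cls v = _\<close> rt tp s
          by (auto intro!: exI[of _ 0])
      next
        case False
        then show ?thesis using e cx x \<open>cls v = _\<close> a
          by (auto intro!: exI[of _ "Suc a"])
      qed
    next
      case False
      then have cv: "cls v = g 1 \<otimes>\<^bsub>G\<^esub> r i [^]\<^bsub>G\<^esub> a" using c by auto
      show ?thesis
      proof (cases a)
        case (Suc b)
        have "g i \<otimes>\<^bsub>G\<^esub> (g 1 \<otimes>\<^bsub>G\<^esub> r i [^]\<^bsub>G\<^esub> Suc b) = r i [^]\<^bsub>G\<^esub> b"
        proof -
          have "r i [^]\<^bsub>G\<^esub> Suc b = r i \<otimes>\<^bsub>G\<^esub> r i [^]\<^bsub>G\<^esub> b"
            using grp.nat_pow_Suc2 r_in[OF i] by blast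
          then show ?thesis using s q ra cancel2[of 1] cancel2[of i] i n3 by (simp add: grp.m_assoc)
        qed
        then show ?thesis using cx x cv Suc a by (auto intro!: exI[of _ b])
      next
        case 0
        obtain u where tu: "t i = Suc u" using tp by (cases "t i") auto
        have "g 1 \<otimes>\<^bsub>G\<^esub> (g i \<otimes>\<^bsub>G\<^esub> r i [^]\<^bsub>G\<^esub> u) = \<one>\<^bsub>G\<^esub>"
        proof -
          have "r i [^]\<^bsub>G\<^esub> Suc u = r i \<otimes>\<^bsub>G\<^esub> r i [^]\<^bsub>G\<^esub> u"
            using grp.nat_pow_Suc2 r_in[OF i] by blast
          then show ?thesis using rt tu s q ra by (simp add: grp.m_assoc)
        qed
        then have "g 1 \<otimes>\<^bsub>G\<^esub> (g 1 \<otimes>\<^bsub>G\<^esub> (g i \<otimes>\<^bsub>G\<^esub> r i [^]\<^bsub>G\<^esub> u)) = g 1"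
          using s by simp
        then have "g i \<otimes>\<^bsub>G\<^esub> r i [^]\<^bsub>G\<^esub> u = g 1" using cancel2[of 1] n3 q ra by simp
        then have "g i \<otimes>\<^bsub>G\<^esub> (g i \<otimes>\<^bsub>G\<^esub> r i [^]\<^bsub>G\<^esub> u) = g i \<otimes>\<^bsub>G\<^esub> g 1" by simp
        then have "r i [^]\<^bsub>G\<^esub> u = g i \<otimes>\<^bsub>G\<^esub> g 1" using cancel2[of i] i ra by simp
        then have "cls (x # v) = r i [^]\<^bsub>G\<^esub> u" using cx x cv 0 s by simp
        then show ?thesis using tu by (auto intro!: exI[of _ u])
      qed
    qed
  qed
qed

lemma NF: assumes "i \<in> {2..n}" "x \<in> star_Wi n t i"
  shows "\<exists>a < t i. x = r i [^]\<^bsub>G\<^esub> a \<or> x = g 1 \<otimes>\<^bsub>G\<^esub> r i [^]\<^bsub>G\<^esub> a"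
  using Wi_words[OF assms] NF_word[OF assms(1)] by blast


section \<open>Universal property\<close>

definition fx :: "(nat \<Rightarrow> nat list set) \<Rightarrow> nat \<Rightarrow> nat list set" where
  "fx f j = (if j \<in> {1..n} then f j else \<one>\<^bsub>G\<^esub>)"

definition prodw :: "(nat \<Rightarrow> nat list set) \<Rightarrow> nat list \<Rightarrow> nat list set" where
  "prodw f w = foldr (\<lambda>j acc. fx f j \<otimes>\<^bsub>G\<^esub> acc) w \<one>\<^bsub>G\<^esub>"

definition homf :: "(nat \<Rightarrow> nat list set) \<Rightarrow> nat list set \<Rightarrow> nat list set" where
  "homf f = restrict (\<lambda>Y. prodw f (SOME w. w \<in> Y)) (carrier G)"

definition good :: "(nat \<Rightarrow> nat list set) \<Rightarrow> bool" where
  "good f \<longleftrightarrow> (\<forall>j\<in>{1..n}. f j \<in> carrier G \<and> f j \<otimes>\<^bsub>G\<^esub> f j = \<one>\<^bsub>G\<^esub>) \<and>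
     (\<forall>i\<in>{2..n}. (f 1 \<otimes>\<^bsub>G\<^esub> f i) [^]\<^bsub>G\<^esub> t i = \<one>\<^bsub>G\<^esub>)"

lemma fx_in: "good f \<Longrightarrow> fx f j \<in> carrier G"
  by (auto simp: fx_def good_def)

lemma prodw_in: "good f \<Longrightarrow> prodw f w \<in> carrier G"
  by (induct w) (auto simp: prodw_def fx_in)

lemma prodw_Cons: "prodw f (j # w) = fx f j \<otimes>\<^bsub>G\<^esub> prodw f w"
  by (simp add: prodw_def)

lemma prodw_Nil: "prodw f [] = \<one>\<^bsub>G\<^esub>"
  by (simp add: prodw_def)

lemma prodw_append: "good f \<Longrightarrow> prodw f (u @ v) = prodw f u \<otimes>\<^bsub>G\<^esub> prodw f v"
  by (induct u) (simp_all add: prodw_Nil prodw_Cons prodw_in fx_in grp.m_assoc)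

lemma prodw_rep: assumes "good f" "i \<in> {2..n}"
  shows "prodw f (concat (replicate m [Suc 0, i])) = (f (Suc 0) \<otimes>\<^bsub>G\<^esub> f i) [^]\<^bsub>G\<^esub> m"
proof (induction m)
  case 0 then show ?case by (simp add: prodw_def)
next
  case (Suc m)
  have f1: "f 1 \<in> carrier G" "f i \<in> carrier G" using assms n3 by (auto simp: good_def)
  have "prodw f [1, i] = f 1 \<otimes>\<^bsub>G\<^esub> f i"
    using assms n3 f1 by (simp add: prodw_def fx_def)
  moreover have "concat (replicate (Suc m) [Suc 0, i]) = concat (replicate m [Suc 0, i]) @ [Suc 0, i]"
    using concat_rep_comm[of m "[Suc 0, i]"] by simp
  ultimately show ?case using Suc assms f1
    by (simp add: prodw_append del: replicate.simps(2))
qed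

lemma prodw_rel: "star_rel n t u v \<Longrightarrow> good f \<Longrightarrow> prodw f u = prodw f v"
proof (induction rule: star_rel.induct)
  case (cong u v a b) then show ?case by (simp add: prodw_append)
next
  case (invol j) then show ?case by (simp add: prodw_def fx_def good_def)
next
  case (braid i) then show ?case by (simp add: prodw_rep good_def prodw_Nil)
qed auto

lemma homf_cls: assumes "good f" "w \<in> L" shows "homf f (cls w) = prodw f w"
proof -
  have "w \<in> cls w" using assms mem_cls star_rel.refl by auto
  then have "(SOME x. x \<in> cls w) \<in> cls w" by (rule someI)
  then have "star_rel n t w (SOME x. x \<in> cls w)" using mem_cls assms by auto
  then show ?thesis using assms prodw_rel cls_in by (simp add: homf_def)
qed

lemma homf_hom: assumes "good f" shows "homf f \<in> hom G G"
proof (rule homI)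
  fix x assume "x \<in> carrier G" then show "homf f x \<in> carrier G"
    using assms by (simp add: homf_def prodw_in)
next
  fix x y assume "x \<in> carrier G" "y \<in> carrier G"
  then obtain u v where "u \<in> L" "v \<in> L" "x = cls u" "y = cls v" by (metis carrierE)
  then show "homf f (x \<otimes>\<^bsub>G\<^esub> y) = homf f x \<otimes>\<^bsub>G\<^esub> homf f y"
    using assms by (simp add: mult_cls homf_cls prodw_append)
qed

lemma homf_gen: assumes "good f" "j \<in> {1..n}" shows "homf f (g j) = f j"
proof -
  have "[j] \<in> L" using assms by auto
  then show ?thesis using assms homf_cls[of f "[j]"]
    by (simp add: g_cls prodw_def fx_def good_def)
qed

lemma homf_ext: "homf f \<in> extensional (carrier G)"
  by (simp add: homf_def)

lemma hom_eq_gen: assumes "h1 \<in> hom G G" "h2 \<in> hom G G" "\<forall>j\<in>{1..n}. h1 (g j) = h2 (g j)"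
   "x \<in> carrier G" shows "h1 x = h2 x"
proof -
  obtain w where w: "w \<in> L" "x = cls w" using assms(4) by (metis carrierE)
  have "\<forall>w \<in> L. h1 (cls w) = h2 (cls w)"
  proof
    fix w :: "nat list" assume "w \<in> L"
    then show "h1 (cls w) = h2 (cls w)"
    proof (induction w)
      case Nil then show ?case
        by (simp add: one_G[symmetric] hom_one[OF assms(1) grp grp] hom_one[OF assms(2) grp grp])
    next
      case (Cons j w)
      then have j: "j \<in> {1..n}" "[j] \<in> L" "w \<in> L" by auto
      then have "cls (j # w) = g j \<otimes>\<^bsub>G\<^esub> cls w" using mult_cls[of "[j]" w] by (simp add: g_cls)
      then show ?case using Cons j assms g_in cls_in by (simp add: hom_mult)
    qed
  qed
  then show ?thesis using w by auto
qed


section \<open>The automorphisms theta\<close>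

lemma rsr: assumes "i \<in> {2..n}" "x \<in> carrier G"
  shows "r i \<otimes>\<^bsub>G\<^esub> (g 1 \<otimes>\<^bsub>G\<^esub> (r i \<otimes>\<^bsub>G\<^esub> x)) = g 1 \<otimes>\<^bsub>G\<^esub> x"
proof -
  have i: "i \<in> {1..n}" using assms by auto
  show ?thesis using assms g1_in g_in[OF i] cancel2[of 1] cancel2[of i] i n3
    by (simp add: grp.m_assoc)
qed

lemma refl_sq: assumes "i \<in> {2..n}"
  shows "(g 1 \<otimes>\<^bsub>G\<^esub> r i [^]\<^bsub>G\<^esub> (a::nat)) \<otimes>\<^bsub>G\<^esub> (g 1 \<otimes>\<^bsub>G\<^esub> r i [^]\<^bsub>G\<^esub> a) = \<one>\<^bsub>G\<^esub>"
proof (induction a)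
  case 0 then show ?case using g_invol[of 1] n3 g1_in by simp
next
  case (Suc a)
  have i: "i \<in> {1..n}" using assms by auto
  have c: "r i \<in> carrier G" "r i [^]\<^bsub>G\<^esub> a \<in> carrier G" "g 1 \<in> carrier G" using r_in[OF i] g1_in by auto
  have A: "g 1 \<otimes>\<^bsub>G\<^esub> r i [^]\<^bsub>G\<^esub> Suc a = (g 1 \<otimes>\<^bsub>G\<^esub> r i [^]\<^bsub>G\<^esub> a) \<otimes>\<^bsub>G\<^esub> r i"
    using c by (simp add: grp.m_assoc)
  have B: "r i [^]\<^bsub>G\<^esub> Suc a = r i \<otimes>\<^bsub>G\<^esub> r i [^]\<^bsub>G\<^esub> a"
    using grp.nat_pow_Suc2 c by blast
  have "(g 1 \<otimes>\<^bsub>G\<^esub> r i [^]\<^bsub>G\<^esub> Suc a) \<otimes>\<^bsub>G\<^esub> (g 1 \<otimes>\<^bsub>G\<^esub> r i [^]\<^bsub>G\<^esub> Suc a)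
     = (g 1 \<otimes>\<^bsub>G\<^esub> r i [^]\<^bsub>G\<^esub> a) \<otimes>\<^bsub>G\<^esub> (r i \<otimes>\<^bsub>G\<^esub> (g 1 \<otimes>\<^bsub>G\<^esub> (r i \<otimes>\<^bsub>G\<^esub> r i [^]\<^bsub>G\<^esub> a)))"
    apply (subst A) apply (subst B) using c by (simp add: grp.m_assoc del: nat_pow_Suc)
  also have "\<dots> = (g 1 \<otimes>\<^bsub>G\<^esub> r i [^]\<^bsub>G\<^esub> a) \<otimes>\<^bsub>G\<^esub> (g 1 \<otimes>\<^bsub>G\<^esub> r i [^]\<^bsub>G\<^esub> a)"
    using rsr[OF assms c(2)] by simp
  finally show ?case using Suc by simp
qed

definition fth :: "nat \<Rightarrow> nat \<Rightarrow> nat \<Rightarrow> nat list set" where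
  "fth i a j = (if j = i then g 1 \<otimes>\<^bsub>G\<^esub> r i [^]\<^bsub>G\<^esub> a else g j)"

definition th :: "nat \<Rightarrow> nat \<Rightarrow> nat list set \<Rightarrow> nat list set" where
  "th i a = homf (fth i a)"

lemma r_pow_mult_t: assumes "i \<in> {2..n}" shows "r i [^]\<^bsub>G\<^esub> (t i * q) = \<one>\<^bsub>G\<^esub>"
proof -
  have i: "i \<in> {1..n}" using assms by auto
  have "r i [^]\<^bsub>G\<^esub> (t i * q) = (r i [^]\<^bsub>G\<^esub> t i) [^]\<^bsub>G\<^esub> q"
    using grp.nat_pow_pow[OF r_in[OF i]] by simp
  then show ?thesis using r_pow_t[OF assms] by simp
qed

lemma good_fth: assumes "i \<in> {2..n}" shows "good (fth i a)"
proof -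
  have i: "i \<in> {1..n}" "i \<noteq> 1" using assms by auto
  have c: "r i \<in> carrier G" "r i [^]\<^bsub>G\<^esub> a \<in> carrier G" "g 1 \<in> carrier G" using r_in[OF i(1)] g1_in by auto
  have "\<forall>j\<in>{1..n}. fth i a j \<in> carrier G \<and> fth i a j \<otimes>\<^bsub>G\<^esub> fth i a j = \<one>\<^bsub>G\<^esub>"
    using c refl_sq[OF assms] g_in g_invol by (auto simp: fth_def)
  moreover have "\<forall>j\<in>{2..n}. (fth i a 1 \<otimes>\<^bsub>G\<^esub> fth i a j) [^]\<^bsub>G\<^esub> t j = \<one>\<^bsub>G\<^esub>"
  proof
    fix j assume j: "j \<in> {2..n}"
    show "(fth i a 1 \<otimes>\<^bsub>G\<^esub> fth i a j) [^]\<^bsub>G\<^esub> t j = \<one>\<^bsub>G\<^esub>"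
    proof (cases "j = i")
      case True
      then have "fth i a 1 \<otimes>\<^bsub>G\<^esub> fth i a j = r i [^]\<^bsub>G\<^esub> a"
        using i c cancel2[of 1] n3 by (simp add: fth_def grp.m_assoc[symmetric])
      moreover have "(r i [^]\<^bsub>G\<^esub> a) [^]\<^bsub>G\<^esub> t i = r i [^]\<^bsub>G\<^esub> (t i * a)"
        using grp.nat_pow_pow[OF c(1)] by (simp add: mult.commute)
      ultimately show ?thesis using True r_pow_mult_t[OF assms] by simp
    next
      case False
      then show ?thesis using i j r_pow_t[OF j] by (simp add: fth_def)
    qed
  qed
  ultimately show ?thesis by (simp add: good_def)
qed

lemma th_hom: "i \<in> {2..n} \<Longrightarrow> th i a \<in> hom G G"
  by (simp add: th_def homf_hom good_fth)

lemma th_gen: "i \<in> {2..n} \<Longrightarrow> j \<in> {1..n} \<Longrightarrow> th i a (g j) = (if j = i then g 1 \<otimes>\<^bsub>G\<^esub> r i [^]\<^bsub>G\<^esub> a else g j)"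
  by (simp add: th_def homf_gen good_fth fth_def)

lemma th_r: assumes "i \<in> {2..n}" shows "th i a (r i [^]\<^bsub>G\<^esub> (b::nat)) = r i [^]\<^bsub>G\<^esub> (a * b)"
proof -
  have i: "i \<in> {1..n}" "i \<noteq> 1" "1 \<in> {1..n}" using assms n3 by auto
  have c: "r i \<in> carrier G" "r i [^]\<^bsub>G\<^esub> a \<in> carrier G" "g 1 \<in> carrier G" "g i \<in> carrier G"
    using r_in[OF i(1)] g1_in g_in[OF i(1)] by auto
  have "th i a (r i) = g 1 \<otimes>\<^bsub>G\<^esub> (g 1 \<otimes>\<^bsub>G\<^esub> r i [^]\<^bsub>G\<^esub> a)"
    using hom_mult[OF th_hom[OF assms] c(3) c(4)] th_gen[OF assms] i by simp
  also have "\<dots> = r i [^]\<^bsub>G\<^esub> a" using cancel2[of 1] c i by simp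
  finally have "th i a (r i) = r i [^]\<^bsub>G\<^esub> a" .
  then have "th i a (r i [^]\<^bsub>G\<^esub> b) = (r i [^]\<^bsub>G\<^esub> a) [^]\<^bsub>G\<^esub> b"
    using hom_nat_pow[OF th_hom[OF assms] c(1) grp grp] by simp
  then show ?thesis using grp.nat_pow_pow[OF c(1)] by simp
qed

lemma r_pow_mod: assumes "i \<in> {2..n}" shows "r i [^]\<^bsub>G\<^esub> (b::nat) = r i [^]\<^bsub>G\<^esub> (b mod t i)"
proof -
  have i: "i \<in> {1..n}" using assms by auto
  have "r i [^]\<^bsub>G\<^esub> b = r i [^]\<^bsub>G\<^esub> (t i * (b div t i)) \<otimes>\<^bsub>G\<^esub> r i [^]\<^bsub>G\<^esub> (b mod t i)"
    using grp.nat_pow_mult[OF r_in[OF i]] by (metis div_mult_mod_eq mult.commute)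
  then show ?thesis using r_pow_mult_t[OF assms] r_in[OF i] by simp
qed

lemma th_th: assumes "i \<in> {2..n}" "(a * b) mod t i = 1" "x \<in> carrier G"
  shows "th i a (th i b x) = x"
proof -
  have i: "i \<in> {1..n}" using assms by auto
  have h: "th i a \<circ> th i b \<in> hom G G" using hom_compose th_hom[OF assms(1)] by blast
  have idh: "(\<lambda>x\<in>carrier G. x) \<in> hom G G" using grp.id_in_auto by (simp add: auto_def)
  have "\<forall>j\<in>{1..n}. (th i a \<circ> th i b) (g j) = (\<lambda>x\<in>carrier G. x) (g j)"
  proof
    fix j assume j: "j \<in> {1..n}"
    show "(th i a \<circ> th i b) (g j) = (\<lambda>x\<in>carrier G. x) (g j)"
    proof (cases "j = i")
      case True
      have c: "r i [^]\<^bsub>G\<^esub> b \<in> carrier G" "g 1 \<in> carrier G" using r_in[OF i] g1_in by auto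
      have "th i a (th i b (g i)) = th i a (g 1) \<otimes>\<^bsub>G\<^esub> th i a (r i [^]\<^bsub>G\<^esub> b)"
        using th_gen[OF assms(1) i] hom_mult[OF th_hom[OF assms(1)] c(2) c(1)] by simp
      also have "\<dots> = g 1 \<otimes>\<^bsub>G\<^esub> r i [^]\<^bsub>G\<^esub> (a * b)" using th_gen[OF assms(1)] th_r[OF assms(1)] n3 assms by simp
      also have "\<dots> = g 1 \<otimes>\<^bsub>G\<^esub> r i" using r_pow_mod[OF assms(1), of "a*b"] assms(2) r_in[OF i] by simp
      also have "\<dots> = g i" using cancel2[of 1] n3 g_in[OF i] by (simp add: grp.m_assoc[symmetric] g1_in)
      finally show ?thesis using True g_in[OF j] by simp
    next
      case False
      then show ?thesis using th_gen[OF assms(1) j] g_in[OF j] by simp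
    qed
  qed
  from hom_eq_gen[OF h idh this assms(3)] assms(3) show ?thesis by simp
qed

lemma th_ext: "th i a \<in> extensional (carrier G)"
  by (simp add: th_def homf_ext)

lemma th_auto: assumes "i \<in> {2..n}" "coprime a (t i)" "1 \<le> a"
  shows "th i a \<in> auto G"
proof -
  obtain b where b: "(a * b) mod t i = 1" using inv_mod[OF assms(2) _ assms(3)] t_pos[OF assms(1)] by force
  have b2: "(b * a) mod t i = 1" using b by (simp add: mult.commute)
  have f: "th i a ` carrier G \<subseteq> carrier G" "th i b ` carrier G \<subseteq> carrier G"
    using th_hom[OF assms(1)] by (auto simp: hom_def)
  have "bij_betw (th i a) (carrier G) (carrier G)"
    by (rule bij_betw_byWitness[where f'="th i b"]) (use th_th[OF assms(1) b] th_th[OF assms(1) b2] f in auto)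
  then show ?thesis using th_hom[OF assms(1)] th_ext by (simp add: auto_def Bij_def)
qed

lemma th_thetas: assumes "i \<in> {2..n}" "coprime a (t i)" "1 \<le> a" "a < t i"
  shows "th i a \<in> star_thetas n t"
  unfolding star_thetas_def using th_auto[OF assms(1-3)] assms th_gen[OF assms(1)]
  by (auto intro!: bexI[of _ i] exI[of _ a])


abbreviation "W i \<equiv> star_Wi n t i"

lemma W_sub: "i \<in> {1..n} \<Longrightarrow> subgroup (W i) G"
  unfolding star_Wi_def using g1_in g_in by (intro grp.generate_is_subgroup) simp

lemma W_carrier: "i \<in> {1..n} \<Longrightarrow> W i \<subseteq> carrier G"
  by (rule subgroup.subset[OF W_sub])

lemma g1_W: "g 1 \<in> W i" unfolding star_Wi_def by (rule generate.incl) simp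

lemma gi_W: "g i \<in> W i" unfolding star_Wi_def by (rule generate.incl) simp

lemma W_mult: "i \<in> {1..n} \<Longrightarrow> x \<in> W i \<Longrightarrow> y \<in> W i \<Longrightarrow> x \<otimes>\<^bsub>G\<^esub> y \<in> W i"
  by (rule subgroup.m_closed[OF W_sub])

lemma W_pow: assumes "i \<in> {1..n}" "x \<in> W i" shows "x [^]\<^bsub>G\<^esub> (b::nat) \<in> W i"
proof (induction b)
  case 0 then show ?case using W_sub[OF assms(1)] subgroup.one_closed by simp
next
  case (Suc b)
  have "x [^]\<^bsub>G\<^esub> Suc b = x [^]\<^bsub>G\<^esub> b \<otimes>\<^bsub>G\<^esub> x" by (rule nat_pow_Suc)
  then show ?case using W_mult[OF assms(1) Suc assms(2)] by simp
qed

lemma r_W: "i \<in> {1..n} \<Longrightarrow> r i \<in> W i" using W_mult[OF _ g1_W gi_W] .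

lemma img_sub: assumes "i \<in> {1..n}" "h \<in> hom G G" "h (g 1) \<in> W i" "h (g i) \<in> W i"
  shows "h ` W i \<subseteq> W i"
proof
  fix y assume "y \<in> h ` W i"
  then obtain x where x: "x \<in> W i" "y = h x" by auto
  have "x \<in> W i \<Longrightarrow> h x \<in> W i"
    unfolding star_Wi_def
  proof (induction x rule: generate.induct)
    case one
    have "h \<one>\<^bsub>G\<^esub> = \<one>\<^bsub>G\<^esub>" by (rule hom_one[OF assms(2) grp grp])
    moreover have "\<one>\<^bsub>G\<^esub> \<in> generate G {g 1, g i}" by (rule generate.one)
    ultimately show ?case by simp
  next
    case (incl x) then show ?case using assms(3,4) unfolding star_Wi_def by auto
  next
    case (inv x) then have "inv\<^bsub>G\<^esub> x = x" using assms(1) n3 g_inv by auto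
    then show ?case using inv assms(3,4) unfolding star_Wi_def by auto
  next
    case (eng x y)
    then have "x \<in> carrier G" "y \<in> carrier G" using W_carrier[OF assms(1)] unfolding star_Wi_def by auto
    then have "h (x \<otimes>\<^bsub>G\<^esub> y) = h x \<otimes>\<^bsub>G\<^esub> h y" by (rule hom_mult[OF assms(2)])
    then show ?case using eng W_mult[OF assms(1)] unfolding star_Wi_def by simp
  qed
  then show "y \<in> W i" using x by auto
qed

lemma img_sup: assumes "i \<in> {1..n}" "h \<in> hom G G" "g 1 \<in> h ` W i" "g i \<in> h ` W i"
  shows "W i \<subseteq> h ` W i"
proof -
  have gh: "group_hom G G h" using assms(2) grp by (simp add: group_hom_def group_hom_axioms_def)
  have "subgroup (h ` W i) G" using group_hom.subgroup_img_is_subgroup[OF gh W_sub[OF assms(1)]] .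
  then show ?thesis unfolding star_Wi_def
    using assms(3,4) grp.generate_subgroup_incl unfolding star_Wi_def by auto
qed

lemma hom_r: assumes "i \<in> {2..n}" "h \<in> hom G G" "h (g 1) = g 1" "h (g i) = g 1 \<otimes>\<^bsub>G\<^esub> r i [^]\<^bsub>G\<^esub> (a::nat)"
  shows "h (r i [^]\<^bsub>G\<^esub> (b::nat)) = r i [^]\<^bsub>G\<^esub> (a * b)"
proof -
  have i: "i \<in> {1..n}" "i \<noteq> 1" "1 \<in> {1..n}" using assms n3 by auto
  have c: "r i \<in> carrier G" "r i [^]\<^bsub>G\<^esub> a \<in> carrier G" "g 1 \<in> carrier G" "g i \<in> carrier G"
    using r_in[OF i(1)] g1_in g_in[OF i(1)] by auto
  have "h (r i) = g 1 \<otimes>\<^bsub>G\<^esub> (g 1 \<otimes>\<^bsub>G\<^esub> r i [^]\<^bsub>G\<^esub> a)"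
    using hom_mult[OF assms(2) c(3) c(4)] assms by simp
  also have "\<dots> = r i [^]\<^bsub>G\<^esub> a" using cancel2[of 1] c i by simp
  finally have "h (r i) = r i [^]\<^bsub>G\<^esub> a" .
  then have "h (r i [^]\<^bsub>G\<^esub> b) = (r i [^]\<^bsub>G\<^esub> a) [^]\<^bsub>G\<^esub> b"
    using hom_nat_pow[OF assms(2) c(1) grp grp] by simp
  then show ?thesis using grp.nat_pow_pow[OF c(1)] by simp
qed

lemma thetas_W: assumes "h \<in> star_thetas n t" "j \<in> {2..n}" shows "h ` W j = W j"
proof -
  from assms(1) obtain i k where h: "h \<in> auto G" and i: "i \<in> {2..n}" and k: "1 \<le> k" "k < t i" "coprime k (t i)"
    and fix1: "\<forall>j\<in>{1..n}. j \<noteq> i \<longrightarrow> h (g j) = g j"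
    and hi: "h (g i) = g 1 \<otimes>\<^bsub>G\<^esub> (r i [^]\<^bsub>G\<^esub> k)"
    unfolding star_thetas_def by blast
  have hh: "h \<in> hom G G" using h by (simp add: auto_def)
  have j1: "j \<in> {1..n}" using assms by auto
  have h1: "h (g 1) = g 1" using fix1 i n3 by auto
  show ?thesis
  proof (cases "j = i")
    case False
    then have hj: "h (g j) = g j" using fix1 j1 by auto
    show ?thesis
    proof
      show "h ` W j \<subseteq> W j" using img_sub[OF j1 hh] h1 hj g1_W gi_W by auto
      have "g 1 \<in> h ` W j" by (rule image_eqI[where x="g 1"]) (use h1 g1_W in simp_all)
      moreover have "g j \<in> h ` W j" by (rule image_eqI[where x="g j"]) (use hj gi_W in simp_all)
      ultimately show "W j \<subseteq> h ` W j" using img_sup[OF j1 hh] by blast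
    qed
  next
    case True
    have i1: "i \<in> {1..n}" using i by auto
    obtain b where b: "(k * b) mod t i = 1" using inv_mod[OF k(3) _ k(1)] t_pos[OF i] by force
    have "h (g 1 \<otimes>\<^bsub>G\<^esub> r i [^]\<^bsub>G\<^esub> b) = g 1 \<otimes>\<^bsub>G\<^esub> r i [^]\<^bsub>G\<^esub> (k * b)"
      using hom_mult[OF hh g1_in] r_in[OF i1] h1 hom_r[OF i hh h1 hi] by simp
    also have "\<dots> = g 1 \<otimes>\<^bsub>G\<^esub> r i" using r_pow_mod[OF i, of "k*b"] b r_in[OF i1] by simp
    also have "\<dots> = g i" using cancel2[of 1] n3 g_in[OF i1] by (simp add: grp.m_assoc[symmetric] g1_in)
    finally have "g i = h (g 1 \<otimes>\<^bsub>G\<^esub> r i [^]\<^bsub>G\<^esub> b)" by simp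
    then have gi: "g i \<in> h ` W i" using W_mult[OF i1 g1_W W_pow[OF i1 r_W[OF i1]]] by blast
    have g1: "g 1 \<in> h ` W i" by (rule image_eqI[where x="g 1"]) (use h1 g1_W in simp_all)
    have "h (g i) \<in> W i" using hi W_mult[OF i1 g1_W W_pow[OF i1 r_W[OF i1]]] by simp
    then have "h ` W i \<subseteq> W i" using img_sub[OF i1 hh] h1 g1_W by simp
    moreover have "W i \<subseteq> h ` W i" using img_sup[OF i1 hh g1 gi] .
    ultimately show ?thesis using True by blast
  qed
qed


abbreviation "A \<equiv> AutoGroup G"

lemma A_carrier: "carrier A = auto G" by (simp add: AutoGroup_def BijGroup_def)

lemma A_mult: "x \<in> auto G \<Longrightarrow> y \<in> auto G \<Longrightarrow> x \<otimes>\<^bsub>A\<^esub> y = compose (carrier G) x y"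
  by (simp add: AutoGroup_def BijGroup_def auto_def)

lemma A_one: "\<one>\<^bsub>A\<^esub> = (\<lambda>x\<in>carrier G. x)" by (simp add: AutoGroup_def BijGroup_def)

lemma A_grp: "group A" by (rule grp.AutoGroup)

lemma A_inv: assumes "x \<in> auto G"
  shows "inv\<^bsub>A\<^esub> x = restrict (inv_into (carrier G) x) (carrier G)"
proof -
  have B: "x \<in> Bij (carrier G)" using assms by (simp add: auto_def)
  have "inv\<^bsub>BijGroup (carrier G)\<^esub> x \<in> auto G"
    using subgroup.m_inv_closed[OF grp.subgroup_auto assms] .
  then have y: "restrict (inv_into (carrier G) x) (carrier G) \<in> auto G" using inv_BijGroup[OF B] by simp
  have yB: "restrict (inv_into (carrier G) x) (carrier G) \<in> Bij (carrier G)" using y by (simp add: auto_def)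
  show ?thesis
  proof (rule group.inv_equality[OF A_grp])
    show "restrict (inv_into (carrier G) x) (carrier G) \<otimes>\<^bsub>A\<^esub> x = \<one>\<^bsub>A\<^esub>"
      using A_mult[OF y assms] A_one Bij_compose_restrict_eq[OF B] by simp
  qed (use assms y A_carrier in auto)
qed

definition K :: "(nat list set \<Rightarrow> nat list set) set" where
  "K = {h \<in> auto G. \<forall>i\<in>{2..n}. h ` W i = W i}"

lemma K_sub: "subgroup K A"
proof (rule subgroup.intro)
  show "K \<subseteq> carrier A" by (auto simp: K_def A_carrier)
next
  fix x y assume x: "x \<in> K" and y: "y \<in> K"
  have xa: "x \<in> auto G" and ya: "y \<in> auto G" using x y by (auto simp: K_def)
  have "x \<otimes>\<^bsub>A\<^esub> y \<in> auto G" using xa ya A_carrier group.subgroup_self[OF A_grp]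
    by (metis A_grp group.is_monoid monoid.m_closed)
  moreover have "\<forall>i\<in>{2..n}. (x \<otimes>\<^bsub>A\<^esub> y) ` W i = W i"
  proof
    fix i assume i: "i \<in> {2..n}"
    then have Wc: "W i \<subseteq> carrier G" using W_carrier by auto
    have "compose (carrier G) x y ` W i = x ` y ` W i"
      using Wc by (auto simp: compose_def image_iff)
    then show "(x \<otimes>\<^bsub>A\<^esub> y) ` W i = W i" using A_mult[OF xa ya] x y i by (simp add: K_def)
  qed
  ultimately show "x \<otimes>\<^bsub>A\<^esub> y \<in> K" by (simp add: K_def)
next
  have "\<one>\<^bsub>A\<^esub> \<in> auto G" using grp.id_in_auto A_one by simp
  moreover have "\<forall>i\<in>{2..n}. \<one>\<^bsub>A\<^esub> ` W i = W i"
  proof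
    fix i assume i: "i \<in> {2..n}"
    then have Wc: "W i \<subseteq> carrier G" using W_carrier by auto
    then show "\<one>\<^bsub>A\<^esub> ` W i = W i" using A_one by auto
  qed
  ultimately show "\<one>\<^bsub>A\<^esub> \<in> K" by (simp add: K_def)
next
  fix x assume x: "x \<in> K"
  have xa: "x \<in> auto G" using x by (simp add: K_def)
  have "inv\<^bsub>A\<^esub> x \<in> auto G" using xa A_carrier by (metis A_grp group.inv_closed)
  moreover have "\<forall>i\<in>{2..n}. (inv\<^bsub>A\<^esub> x) ` W i = W i"
  proof
    fix i assume i: "i \<in> {2..n}"
    then have Wc: "W i \<subseteq> carrier G" using W_carrier by auto
    have inj: "inj_on x (carrier G)" using xa by (simp add: auto_def Bij_def bij_betw_def)
    have "restrict (inv_into (carrier G) x) (carrier G) ` W i = inv_into (carrier G) x ` W i"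
      using Wc by (auto simp: image_iff)
    also have "\<dots> = inv_into (carrier G) x ` x ` W i" using x i by (simp add: K_def)
    also have "\<dots> = W i" using inv_into_image_cancel[OF inj Wc] .
    finally show "(inv\<^bsub>A\<^esub> x) ` W i = W i" using A_inv[OF xa] by simp
  qed
  ultimately show "inv\<^bsub>A\<^esub> x \<in> K" by (simp add: K_def)
qed

lemma C_sub_K: "star_C n t \<subseteq> K"
  unfolding star_C_def
proof (rule group.generate_subgroup_incl[OF A_grp _ K_sub])
  show "star_thetas n t \<subseteq> K"
  proof
    fix h assume h: "h \<in> star_thetas n t"
    then have "h \<in> auto G" by (simp add: star_thetas_def)
    then show "h \<in> K" using thetas_W[OF h] by (simp add: K_def)
  qed
qed

lemma C_sub_auto: "star_C n t \<subseteq> auto G"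
  using C_sub_K by (auto simp: K_def)


section \<open>Normal forms\<close>

definition Xe :: "nat \<Rightarrow> nat \<Rightarrow> bool \<Rightarrow> nat list set" where
  "Xe i a e = (if e then g 1 \<otimes>\<^bsub>G\<^esub> r i [^]\<^bsub>G\<^esub> a else r i [^]\<^bsub>G\<^esub> a)"

definition sh :: "nat \<Rightarrow> nat \<Rightarrow> nat \<Rightarrow> bool \<Rightarrow> int" where
  "sh k i a e = (if i = k then (if e then - int a else int a) else 0)"

lemma X_eq: assumes "i \<in> {2..n}" "j \<in> {2..n}" "k \<in> {2..n}" "Xe i a e = Xe j b d"
  shows "e = d \<and> int (t k) dvd (sh k i a e - sh k j b d)"
proof -
  have i1: "i \<in> {1..n}" and j1: "j \<in> {1..n}" using assms by auto
  define wa where "wa = (if e then 1 # concat (replicate a [1, i]) else concat (replicate a [1, i]))"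
  define wb where "wb = (if d then 1 # concat (replicate b [1, j]) else concat (replicate b [1, j]))"
  have La: "wa \<in> L" using rep_L[OF i1] one_L by (auto simp: wa_def)
  have Lb: "wb \<in> L" using rep_L[OF j1] one_L by (auto simp: wb_def)
  have "Xe i a e = cls wa" using sr_pow_cls[OF i1, of a] r_pow_cls[OF i1, of a] by (simp add: Xe_def wa_def)
  moreover have "Xe j b d = cls wb" using sr_pow_cls[OF j1, of b] r_pow_cls[OF j1, of b] by (simp add: Xe_def wb_def)
  ultimately have "cls wa = cls wb" using assms(4) by simp
  from cls_ev[OF La Lb this, of k] assms(3)
  have "fst (ev k wa) = fst (ev k wb) \<and> int (t k) dvd (snd (ev k wa) - snd (ev k wb))" by auto
  then show ?thesis using assms(1-3)
    by (auto simp: wa_def wb_def ev_cases sh_def dm_def split: if_splits)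
qed

lemma NFX: assumes "i \<in> {2..n}" "x \<in> W i" shows "\<exists>a e. a < t i \<and> x = Xe i a e"
  using NF[OF assms] unfolding Xe_def by (metis (full_types))

lemma X_0F: "i \<in> {2..n} \<Longrightarrow> Xe i 0 False = \<one>\<^bsub>G\<^esub>" by (simp add: Xe_def)
lemma X_0T: "i \<in> {2..n} \<Longrightarrow> Xe i 0 True = g 1" using g1_in by (simp add: Xe_def)
lemma X_1T: assumes "i \<in> {2..n}" shows "Xe i 1 True = g i"
proof -
  have i1: "i \<in> {1..n}" using assms by auto
  show ?thesis using cancel2[of 1] n3 g_in[OF i1] r_in[OF i1]
    by (simp add: Xe_def grp.m_assoc[symmetric] g1_in)
qed

lemma g1_ne_one: "g 1 \<noteq> \<one>\<^bsub>G\<^esub>"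
proof
  assume "g 1 = \<one>\<^bsub>G\<^esub>"
  then have "Xe 2 0 True = Xe 2 0 False" using X_0F X_0T n3 by simp
  then show False using X_eq[of 2 2 2 0 True 0 False] n3 by auto
qed

lemma gi_ne_one: "i \<in> {2..n} \<Longrightarrow> g i \<noteq> \<one>\<^bsub>G\<^esub>"
  using X_eq[of i i i 1 True 0 False] X_1T X_0F by auto

lemma gi_ne_g1: assumes "i \<in> {2..n}" shows "g i \<noteq> g 1"
proof
  assume "g i = g 1"
  then have "Xe i 1 True = Xe i 0 True" using X_1T X_0T assms by simp
  then have "int (t i) dvd -1" using X_eq[of i i i 1 True 0 True] assms by (simp add: sh_def)
  then show False using t_pos[OF assms] by simp
qed

section \<open>The hard direction\<close>

context
  fixes \<theta> assumes th_auto: "\<theta> \<in> auto G" and pres: "\<forall>i\<in>{2..n}. \<theta> ` W i = W i"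
begin

lemma th_hom': "\<theta> \<in> hom G G" using th_auto by (simp add: auto_def)

lemma th_inj: "inj_on \<theta> (carrier G)" using th_auto by (simp add: auto_def Bij_def bij_betw_def)

lemma th_one: "\<theta> \<one>\<^bsub>G\<^esub> = \<one>\<^bsub>G\<^esub>" by (rule hom_one[OF th_hom' grp grp])

lemma th_in_W: "i \<in> {2..n} \<Longrightarrow> x \<in> W i \<Longrightarrow> \<theta> x \<in> W i" using pres by blast

lemma fix_g1: "\<theta> (g 1) = g 1"
proof -
  have two: "2 \<in> {2..n}" and three: "3 \<in> {2..n}" using n3 by auto
  obtain a e where a: "\<theta> (g 1) = Xe 2 a e" using NFX[OF two th_in_W[OF two g1_W]] by auto
  obtain b d where b: "b < t 3" "\<theta> (g 1) = Xe 3 b d" using NFX[OF three th_in_W[OF three g1_W]] by auto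
  from X_eq[OF two three three, of a e b d] a b
  have "e = d" "int (t 3) dvd (0 - (if d then - int b else int b))" by (auto simp: sh_def)
  then have "int (t 3) dvd int b" by (cases d) auto
  then have "b = 0" using b(1) by (cases "b = 0") (auto dest: nat_dvd_not_less)
  then have "\<theta> (g 1) = Xe 3 0 d" using b by simp
  moreover have "\<theta> (g 1) \<noteq> \<one>\<^bsub>G\<^esub>"
  proof
    assume "\<theta> (g 1) = \<one>\<^bsub>G\<^esub>"
    then have "\<theta> (g 1) = \<theta> \<one>\<^bsub>G\<^esub>" using th_one by simp
    then have "g 1 = \<one>\<^bsub>G\<^esub>" using th_inj g1_in grp.one_closed by (auto dest: inj_onD)
    then show False using g1_ne_one by simp
  qed
  ultimately show ?thesis using X_0F[OF three] X_0T[OF three] by (cases d) auto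
qed

lemma gi_form: assumes i: "i \<in> {2..n}"
  shows "\<exists>a. 1 \<le> a \<and> a < t i \<and> coprime a (t i) \<and> \<theta> (g i) = g 1 \<otimes>\<^bsub>G\<^esub> r i [^]\<^bsub>G\<^esub> a"
proof -
  have i1: "i \<in> {1..n}" using i by auto
  obtain a e where a: "a < t i" "\<theta> (g i) = Xe i a e" using NFX[OF i th_in_W[OF i gi_W]] by auto
  have gic: "g i \<in> carrier G" using g_in[OF i1] .
  have sq: "\<theta> (g i) \<otimes>\<^bsub>G\<^esub> \<theta> (g i) = \<one>\<^bsub>G\<^esub>"
    using hom_mult[OF th_hom' gic gic] g_invol[OF i1] th_one by simp
  have e: "e = True"
  proof (rule ccontr)
    assume "e \<noteq> True"
    then have tr: "\<theta> (g i) = r i [^]\<^bsub>G\<^esub> a" using a by (simp add: Xe_def)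
    then have "r i [^]\<^bsub>G\<^esub> (a + a) = \<one>\<^bsub>G\<^esub>" using sq grp.nat_pow_mult[OF r_in[OF i1]] by simp
    then have "Xe i (a + a) False = Xe i 0 False" using X_0F[OF i] by (simp add: Xe_def)
    then have "int (t i) dvd (int (a + a) - 0)" using X_eq[OF i i i, of "a + a" False 0 False] by (simp add: sh_def)
    then have "int (t i) dvd 2 * int a" by simp
    then have "t i dvd a" using odd_dvd tprop[OF i] by blast
    then have "a = 0" using a(1) by (cases "a = 0") (auto dest: nat_dvd_not_less)
    then have "\<theta> (g i) = \<theta> \<one>\<^bsub>G\<^esub>" using tr th_one by simp
    then have "g i = \<one>\<^bsub>G\<^esub>" using th_inj gic grp.one_closed by (auto dest: inj_onD)
    then show False using gi_ne_one[OF i] by simp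
  qed
  then have ta: "\<theta> (g i) = g 1 \<otimes>\<^bsub>G\<^esub> r i [^]\<^bsub>G\<^esub> a" using a by (simp add: Xe_def)
  have a1: "a \<ge> 1"
  proof (rule ccontr)
    assume "\<not> a \<ge> 1"
    then have "a = 0" by simp
    then have "\<theta> (g i) = \<theta> (g 1)" using ta fix_g1 g1_in by simp
    then have "g i = g 1" using th_inj gic g1_in by (auto dest: inj_onD)
    then show False using gi_ne_g1[OF i] by simp
  qed
  have "g i \<in> \<theta> ` W i" using pres i gi_W by blast
  then obtain y where y: "y \<in> W i" "g i = \<theta> y" by auto
  obtain b d where b: "y = Xe i b d" using NFX[OF i y(1)] by auto
  have "\<theta> y = Xe i (a * b) d"
  proof (cases d)
    case True
    have "\<theta> y = \<theta> (g 1) \<otimes>\<^bsub>G\<^esub> \<theta> (r i [^]\<^bsub>G\<^esub> b)"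
      using b True hom_mult[OF th_hom' g1_in] r_in[OF i1] by (simp add: Xe_def)
    then show ?thesis using True fix_g1 hom_r[OF i th_hom' fix_g1 ta] by (simp add: Xe_def)
  next
    case False
    then show ?thesis using b hom_r[OF i th_hom' fix_g1 ta] by (simp add: Xe_def)
  qed
  then have "Xe i 1 True = Xe i (a * b) d" using y X_1T[OF i] by simp
  then have "int (t i) dvd (- 1 + int (a * b))" using X_eq[OF i i i, of 1 True "a*b" d] by (auto simp: sh_def)
  then have "coprime a (t i)" using dvd_coprime[of "t i" a b] by simp
  then show ?thesis using a1 a ta by blast
qed


lemma build: "finite S \<Longrightarrow> S \<subseteq> {2..n} \<Longrightarrow>
  \<exists>\<psi> \<in> star_C n t. \<forall>j\<in>{1..n}. \<psi> (g j) = (if j \<in> S then \<theta> (g j) else g j)"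
proof (induction S rule: finite_induct)
  case empty
  have "\<one>\<^bsub>A\<^esub> \<in> star_C n t" unfolding star_C_def by (rule generate.one)
  moreover have "\<forall>j\<in>{1..n}. \<one>\<^bsub>A\<^esub> (g j) = g j" using A_one g_in by simp
  ultimately show ?case by auto
next
  case (insert i S)
  then obtain \<psi> where psi: "\<psi> \<in> star_C n t" "\<forall>j\<in>{1..n}. \<psi> (g j) = (if j \<in> S then \<theta> (g j) else g j)"
    by auto
  have i: "i \<in> {2..n}" and iS: "i \<notin> S" and S2: "S \<subseteq> {2..n}" using insert by auto
  have i1: "i \<in> {1..n}" using i by auto
  obtain a where a: "1 \<le> a" "a < t i" "coprime a (t i)" "\<theta> (g i) = g 1 \<otimes>\<^bsub>G\<^esub> r i [^]\<^bsub>G\<^esub> a"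
    using gi_form[OF i] by auto
  have tauT: "th i a \<in> star_thetas n t" using th_thetas[OF i a(3,1,2)] .
  then have tauC: "th i a \<in> star_C n t" unfolding star_C_def by (rule generate.incl)
  have psiA: "\<psi> \<in> auto G" and tauA: "th i a \<in> auto G" using C_sub_auto psi(1) tauC by auto
  have psih: "\<psi> \<in> hom G G" using psiA by (simp add: auto_def)
  define \<psi>' where "\<psi>' = \<psi> \<otimes>\<^bsub>A\<^esub> th i a"
  have "\<psi>' \<in> star_C n t" unfolding \<psi>'_def star_C_def
    by (rule generate.eng) (use psi(1) tauC in \<open>auto simp: star_C_def\<close>)
  moreover have "\<forall>j\<in>{1..n}. \<psi>' (g j) = (if j \<in> insert i S then \<theta> (g j) else g j)"
  proof
    fix j assume j: "j \<in> {1..n}"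
    have "\<psi>' (g j) = \<psi> (th i a (g j))" using A_mult[OF psiA tauA] g_in[OF j] by (simp add: \<psi>'_def compose_def)
    show "\<psi>' (g j) = (if j \<in> insert i S then \<theta> (g j) else g j)"
    proof (cases "j = i")
      case True
      have p1: "\<psi> (g 1) = g 1" using psi(2) S2 n3 by auto
      have "\<psi> (g i) = g i" using psi(2) iS i1 by auto
      then have pi: "\<psi> (g i) = g 1 \<otimes>\<^bsub>G\<^esub> r i [^]\<^bsub>G\<^esub> (1::nat)" using X_1T[OF i] by (simp add: Xe_def)
      have "\<psi> (g 1 \<otimes>\<^bsub>G\<^esub> r i [^]\<^bsub>G\<^esub> a) = \<psi> (g 1) \<otimes>\<^bsub>G\<^esub> \<psi> (r i [^]\<^bsub>G\<^esub> a)"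
        using hom_mult[OF psih g1_in] r_in[OF i1] by simp
      also have "\<dots> = g 1 \<otimes>\<^bsub>G\<^esub> r i [^]\<^bsub>G\<^esub> a" using p1 hom_r[OF i psih p1 pi, of a] by simp
      finally show ?thesis using True \<open>\<psi>' (g j) = _\<close> th_gen[OF i i1] a(4) by simp
    next
      case False
      then show ?thesis using \<open>\<psi>' (g j) = _\<close> th_gen[OF i j] psi(2) j by simp
    qed
  qed
  ultimately show ?case by blast
qed

lemma in_C: "\<theta> \<in> star_C n t"
proof -
  obtain \<psi> where psi: "\<psi> \<in> star_C n t" "\<forall>j\<in>{1..n}. \<psi> (g j) = (if j \<in> {2..n} then \<theta> (g j) else g j)"
    using build[of "{2..n}"] by auto
  have psiA: "\<psi> \<in> auto G" using C_sub_auto psi(1) by auto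
  have "\<forall>j\<in>{1..n}. \<psi> (g j) = \<theta> (g j)"
  proof
    fix j assume j: "j \<in> {1..n}"
    show "\<psi> (g j) = \<theta> (g j)"
    proof (cases "j = 1")
      case True then show ?thesis using psi(2) j fix_g1 by auto
    next
      case False then show ?thesis using psi(2) j by auto
    qed
  qed
  then have "\<And>x. x \<in> carrier G \<Longrightarrow> \<psi> x = \<theta> x"
    using hom_eq_gen psiA th_hom' by (auto simp: auto_def)
  then have "\<psi> = \<theta>" using psiA th_auto
    by (intro extensionalityI[of _ "carrier G"]) (auto simp: auto_def Bij_def)
  then show ?thesis using psi(1) by simp
qed

end


theorem main: "\<theta> \<in> auto G \<Longrightarrow> \<theta> \<in> star_C n t \<longleftrightarrow> (\<forall>i\<in>{2..n}. \<theta> ` W i = W i)"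
proof
  assume "\<theta> \<in> star_C n t"
  then have "\<theta> \<in> K" using C_sub_K by blast
  then show "\<forall>i\<in>{2..n}. \<theta> ` W i = W i" by (simp add: K_def)
next
  assume "\<theta> \<in> auto G" "\<forall>i\<in>{2..n}. \<theta> ` W i = W i"
  then show "\<theta> \<in> star_C n t" by (rule in_C)
qed

end

lemma block_exists:
  fixes k :: "nat \<Rightarrow> nat" and l n i :: nat
  assumes "(\<Sum>j=1..l. k j) = n - 1" "i \<in> {2..n}"
  shows "\<exists>j\<in>{1..l}. (\<Sum>r=1..<j. k r) + 2 \<le> i \<and> i \<le> (\<Sum>r=1..j. k r) + 1"
proof -
  define P where "P j \<longleftrightarrow> i \<le> (\<Sum>r=1..j. k r) + 1" for j :: nat
  have Pl: "P l" using assms by (auto simp: P_def)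
  define j0 where "j0 = (LEAST j. P j)"
  have Pj0: "P j0" unfolding j0_def by (rule LeastI[of P l, OF Pl])
  have jl: "j0 \<le> l" unfolding j0_def by (rule Least_le[of P l, OF Pl])
  have "j0 \<noteq> 0"
  proof
    assume "j0 = 0"
    then show False using Pj0 assms(2) by (simp add: P_def)
  qed
  then obtain j' where j': "j0 = Suc j'" by (cases j0) auto
  have "\<not> P j'" using not_less_Least[of j' P] j' j0_def by simp
  moreover have "{1..<j0} = {1..j'}" using j' by auto
  ultimately have "(\<Sum>r=1..<j0. k r) + 2 \<le> i" by (simp add: P_def)
  moreover have "j0 \<in> {1..l}" using jl j' by auto
  ultimately show ?thesis using Pj0 by (auto simp: P_def)
qed

theorem lemma3p3:
  fixes n l :: nat and m k t :: "nat \<Rightarrow> nat" and \<theta> :: "nat list set \<Rightarrow> nat list set"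
  assumes "n \<ge> 3"
    and "\<forall>j\<in>{1..l}. odd (m j) \<and> m j \<ge> 3 \<and> k j \<ge> 1"
    and "inj_on m {1..l}"
    and "(\<Sum>j=1..l. k j) = n - 1"
    and "\<forall>j\<in>{1..l}. \<forall>i. (\<Sum>r=1..<j. k r) + 2 \<le> i \<and> i \<le> (\<Sum>r=1..j. k r) + 1 \<longrightarrow> t i = m j"
    and "\<theta> \<in> auto (star_group n t)"
  shows "\<theta> \<in> star_C n t \<longleftrightarrow> (\<forall>i\<in>{2..n}. \<theta> ` star_Wi n t i = star_Wi n t i)"
proof -
  have tp: "odd (t i) \<and> t i \<ge> 3" if i: "i \<in> {2..n}" for i
  proof -
    obtain j where j: "j \<in> {1..l}" "(\<Sum>r=1..<j. k r) + 2 \<le> i" "i \<le> (\<Sum>r=1..j. k r) + 1"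
      using block_exists[OF assms(4) i] by blast
    then have "t i = m j" using assms(5) by blast
    then show ?thesis using assms(2) j(1) by auto
  qed
  interpret star n t by unfold_locales (use assms(1) tp in auto)
  show ?thesis using main[OF assms(6)] by simp
qed

end
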